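(* Let $r>1$ be real and let $a,b\in\mathbb{S}$ be such that the open interval $(\sigma_{-r}(a),\sigma_{-r}(b))$ is a gap of $\sigma_{-r}(\mathbb{S})$. Then $b\in\mathbb{N}$, i.e. $v_p(b)<\infty$ for every prime $p$ and $v_p(b)=0$ for all but finitely many $p$.
   Context: A Steinitz number is a formal product $n=\prod_p p^{\alpha_p}$ over all primes with $\alpha_p\in\mathbb{Z}_{\ge0}\cup\{\infty\}$, $v_p(n)=\alpha_p$; $\mathbb{S}$ is the set of Steinitz numbers, and $\mathbb{N}\subset\mathbb{S}$ consists of those with all exponents finite and almost all zero. $\sigma_{-r}$ is defined on $\mathbb{S}$ multiplicatively by $\sigma_{-r}(p^\alpha)=\sum_{i=0}^\alpha p^{-ri}$ for finite $\alpha$ and $\sigma_{-r}(p^\infty)=\frac1{1-p^{-r}}$. A gap of $\sigma_{-r}(\mathbb{S})$ is a bounded connected component of $\mathbb{R}\setminus\sigma_{-r}(\mathbb{S})$. *)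

theory Defs
  imports "HOL-Analysis.Analysis" "HOL-Computational_Algebra.Primes" "HOL-Library.Extended_Nat"
begin

text \<open>A Steinitz number is represented by its exponent function p \<mapsto> v_p(n),
  with values in nat extended by infinity; exponents at non-primes are forced to be 0.\<close>
type_synonym steinitz = "nat \<Rightarrow> enat"

definition Steinitz :: "steinitz set" where
  "Steinitz = {n. \<forall>p. \<not> prime p \<longrightarrow> n p = 0}"

definition SteinitzNat :: "steinitz set" where
  "SteinitzNat = {n \<in> Steinitz. (\<forall>p. n p \<noteq> \<infinity>) \<and> finite {p. n p \<noteq> 0}}"

definition sigma_pp :: "real \<Rightarrow> nat \<Rightarrow> enat \<Rightarrow> real" where
  "sigma_pp r p \<alpha> = (case \<alpha> of
      enat k \<Rightarrow> (\<Sum>i\<le>k. real p powr (- r * real i))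
    | \<infinity> \<Rightarrow> 1 / (1 - real p powr (- r)))"

definition sigma :: "real \<Rightarrow> steinitz \<Rightarrow> real" where
  "sigma r n = (\<Prod>p. if prime p then sigma_pp r p (n p) else 1)"

end

theory Submission
  imports Defs
begin

definition F :: "real \<Rightarrow> steinitz \<Rightarrow> nat \<Rightarrow> real" where
  "F r n p = (if prime p then sigma_pp r p (n p) else 1)"

lemma sigma_F: "sigma r n = prodinf (F r n)"
  unfolding sigma_def F_def by simp

lemma xbounds:
  assumes "prime (p::nat)" "r > 1"
  shows "0 < real p powr (-r)" "real p powr (-r) \<le> 1/2"
proof -
  have p2: "real p \<ge> 2" using assms prime_ge_2_nat by auto
  show "0 < real p powr (-r)" using p2 by simp
  have "real p powr (-r) \<le> real p powr (-1)"
    using p2 assms by (intro powr_mono) auto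
  also have "\<dots> = 1 / real p" using p2 by (simp add: powr_minus_divide)
  also have "\<dots> \<le> 1/2" using p2 by (simp add: field_simps)
  finally show "real p powr (-r) \<le> 1/2" .
qed

lemma sigma_pp_fin:
  assumes "prime (p::nat)" "r > 1"
  shows "sigma_pp r p (enat k) = (1 - (real p powr (-r))^Suc k) / (1 - real p powr (-r))"
proof -
  have p0: "real p > 0" using assms prime_gt_0_nat by auto
  have "sigma_pp r p (enat k) = (\<Sum>i\<le>k. (real p powr (-r))^i)"
    unfolding sigma_pp_def using p0
    by (simp, intro sum.cong refl) (simp add: powr_realpow[symmetric] powr_powr)
  also have "\<dots> = (1 - (real p powr (-r))^Suc k) / (1 - real p powr (-r))"
    using xbounds[OF assms] by (subst sum_gp0) auto
  finally show ?thesis .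
qed

lemma sigma_pp_inf:
  "sigma_pp r p \<infinity> = 1 / (1 - real p powr (-r))"
  unfolding sigma_pp_def by simp

lemma sigma_pp_bounds:
  assumes "prime (p::nat)" "r > 1"
  shows "1 \<le> sigma_pp r p a" "sigma_pp r p a \<le> 1 / (1 - real p powr (-r))"
proof -
  define x where "x = real p powr (-r)"
  have x: "0 < x" "x \<le> 1/2" using xbounds[OF assms] x_def by auto
  have "1 \<le> sigma_pp r p a \<and> sigma_pp r p a \<le> 1 / (1 - x)"
  proof (cases a)
    case (enat k)
    have xk: "x^Suc k \<le> x" "0 < x^Suc k"
      using x by (auto intro: power_le_one simp: mult_le_cancel_left1)
    have "sigma_pp r p a = (1 - x^Suc k) / (1 - x)"
      using sigma_pp_fin[OF assms] enat x_def by simp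
    moreover have "1 \<le> (1 - x^Suc k) / (1 - x)" using x xk by (simp add: divide_simps)
    moreover have "(1 - x^Suc k) / (1 - x) \<le> 1 / (1 - x)" using x xk by (simp add: divide_simps)
    ultimately show ?thesis by simp
  next
    case infinity
    then show ?thesis using x by (simp add: sigma_pp_inf x_def[symmetric] field_simps)
  qed
  then show "1 \<le> sigma_pp r p a" "sigma_pp r p a \<le> 1 / (1 - real p powr (-r))"
    by (auto simp: x_def)
qed

lemma F_ge1: "r > 1 \<Longrightarrow> 1 \<le> F r n p"
  unfolding F_def using sigma_pp_bounds by auto

lemma F_conv:
  assumes "r > 1"
  shows "convergent_prod (F r n)"
proof -
  have le: "\<bar>F r n k - 1\<bar> \<le> 2 * real k powr (-r)" for k
  proof (cases "prime k")
    case True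
    define x where "x = real k powr (-r)"
    have x: "0 < x" "x \<le> 1/2" using xbounds[OF True assms] x_def by auto
    have a: "F r n k \<le> 1/(1-x)" using sigma_pp_bounds[OF True assms] True
      by (simp add: F_def x_def)
    have "x * x \<le> x * (1/2)" using x by (intro mult_left_mono) auto
    then have "1 \<le> (1 + 2 * x) * (1 - x)" by (simp add: algebra_simps)
    then have "1/(1-x) \<le> 1 + 2 * x" using x by (simp add: divide_simps)
    with a show ?thesis using F_ge1[OF assms, of n k] x_def by simp
  next
    case False
    then show ?thesis by (simp add: F_def)
  qed
  have "summable (\<lambda>k. 2 * real k powr (-r))"
    using assms by (intro summable_mult) (simp add: summable_real_powr_iff)
  then have "summable (\<lambda>k. \<bar>F r n k - 1\<bar>)"
    by (rule summable_comparison_test'[where N=0]) (use le in auto)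
  then have "convergent_prod (\<lambda>k. 1 + (F r n k - 1))"
    by (rule summable_imp_convergent_prod_real) (use F_ge1[OF assms, of n] in \<open>smt (verit)\<close>)
  then show ?thesis by simp
qed


lemma sigma_pp_zero: "prime (p::nat) \<Longrightarrow> sigma_pp r p 0 = 1"
  unfolding sigma_pp_def using prime_gt_0_nat[of p] by (simp add: zero_enat_def)

lemma sigma_pp_gt1:
  assumes "prime (p::nat)" "r > 1" "a \<noteq> 0"
  shows "1 < sigma_pp r p a"
proof -
  define x where "x = real p powr (-r)"
  have x: "0 < x" "x \<le> 1/2" using xbounds[OF assms(1,2)] x_def by auto
  show ?thesis
  proof (cases a)
    case (enat m)
    then have "m \<ge> 1" using assms(3) by (cases m) (auto simp: zero_enat_def)
    then have xk: "x^Suc m < x^1" using x by (intro power_strict_decreasing) auto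
    have "sigma_pp r p a = (1 - x^Suc m) / (1 - x)"
      using sigma_pp_fin[OF assms(1,2)] enat x_def by simp
    moreover have "1 < (1 - x^Suc m) / (1 - x)" using x xk by (subst less_divide_eq) auto
    ultimately show ?thesis by simp
  next
    case infinity
    then show ?thesis using x by (simp add: sigma_pp_inf x_def[symmetric] divide_simps)
  qed
qed

lemma sigma_pos:
  assumes "r > 1" shows "1 \<le> sigma r n"
proof -
  have "prod (F r n) {..<0} \<le> prodinf (F r n)"
    using F_conv[OF assms] F_ge1[OF assms] by (intro prod_le_prodinf) (auto intro: order_trans[OF zero_le_one])
  then show ?thesis by (simp add: sigma_F)
qed

lemma approx:
  assumes r: "r > 1" and b: "b \<in> Steinitz" and nb: "b \<notin> SteinitzNat" and e: "e > 0"
  shows "\<exists>c\<in>Steinitz. sigma r b - e < sigma r c \<and> sigma r c < sigma r b"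
proof (cases "\<exists>p. b p = \<infinity>")
  case True
  then obtain p where bp: "b p = \<infinity>" by blast
  have pp: "prime p" using b bp unfolding Steinitz_def by (auto simp: zero_enat_def)
  define x where "x = real p powr (-r)"
  have x: "0 < x" "x \<le> 1/2" using xbounds[OF pp r] x_def by auto
  have sb: "1 \<le> sigma r b" using sigma_pos[OF r] .
  obtain n where n: "x^n < e / sigma r b" using real_arch_pow_inv[of "e / sigma r b" x] x e sb by auto
  define c where "c = b(p := enat n)"
  have cS: "c \<in> Steinitz" using b pp unfolding c_def Steinitz_def by auto
  define g where "g = (\<lambda>k. if k = p then 1 - x^Suc n else 1)"
  have g: "g has_prod (1 - x^Suc n)"
    using has_prod_finite[of "{p}" g] by (simp add: g_def)
  have Fc: "F r c = (\<lambda>k. F r b k * g k)"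
  proof
    fix k show "F r c k = F r b k * g k"
    proof (cases "k = p")
      case True
      then show ?thesis using x pp bp sigma_pp_fin[OF pp r, of n]
        by (simp add: F_def c_def g_def sigma_pp_inf x_def[symmetric])
    next
      case False then show ?thesis by (simp add: F_def c_def g_def)
    qed
  qed
  have "F r c has_prod (sigma r b * (1 - x^Suc n))"
    unfolding Fc sigma_F by (rule has_prod_mult[OF convergent_prod_has_prod[OF F_conv[OF r]] g])
  then have sc: "sigma r c = sigma r b * (1 - x^Suc n)"
    by (simp add: sigma_F has_prod_iff)
  have "x^Suc n \<le> x^n" using x by (intro power_decreasing) auto
  then have "x^Suc n < e / sigma r b" using n by simp
  then have "sigma r b * x^Suc n < e" using sb by (simp add: field_simps)
  moreover have "0 < sigma r b * x^Suc n" using sb x by simp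
  ultimately show ?thesis using cS sc by (intro bexI[of _ c]) (auto simp: algebra_simps)
next
  case False
  then have inf: "infinite {p. b p \<noteq> 0}" using nb b unfolding SteinitzNat_def by auto
  have lim: "(\<lambda>N. \<Prod>i\<le>N. F r b i) \<longlonglongrightarrow> sigma r b"
    unfolding sigma_F by (rule convergent_prod_LIMSEQ[OF F_conv[OF r]])
  then obtain N where N: "\<bar>(\<Prod>i\<le>N. F r b i) - sigma r b\<bar> < e"
    using LIMSEQ_D[OF lim e] by auto
  define c where "c = (\<lambda>p. if p \<le> N then b p else 0)"
  have cS: "c \<in> Steinitz" using b unfolding c_def Steinitz_def by auto
  have Fc: "F r c k = (if k \<le> N then F r b k else 1)" for k
    by (simp add: F_def c_def sigma_pp_zero)
  have sc: "sigma r c = (\<Prod>i\<le>N. F r b i)"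
    unfolding sigma_F by (subst prodinf_finite[of "{..N}"]) (auto simp: Fc)
  obtain q where q: "q > N" "b q \<noteq> 0"
  proof -
    have "\<not> {p. b p \<noteq> 0} \<subseteq> {..N}" using inf finite_subset by blast
    then obtain q where "q \<notin> {..N}" "b q \<noteq> 0" by blast
    then show ?thesis using that by (meson atMost_iff not_le)
  qed
  have qp: "prime q" using b q unfolding Steinitz_def by auto
  have "sigma r c < sigma r b"
    unfolding sigma_F
  proof (rule has_prod_less[of "F r c" q "F r b"])
    have "F r c q = 1" using Fc[of q] q by simp
    moreover have "1 < F r b q" using q qp sigma_pp_gt1[OF qp r] by (simp add: F_def)
    ultimately show "F r c q < F r b q" by simp
    show "F r c has_prod prodinf (F r c)" using F_conv[OF r] by blast
    show "F r b has_prod prodinf (F r b)" using F_conv[OF r] by blast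
    show "0 < F r c n" for n using F_ge1[OF r, of c n] by simp
    show "F r c n \<le> F r b n" for n using F_ge1[OF r, of b n] by (simp add: Fc)
  qed
  then show ?thesis using cS sc N by (intro bexI[of _ c]) auto
qed

theorem mainTheorem17:
  fixes r :: real and a b :: steinitz
  assumes "r > 1"
    and "a \<in> Steinitz" and "b \<in> Steinitz"
    and "{sigma r a <..< sigma r b} \<in> components (- (sigma r ` Steinitz))"
    and "bounded {sigma r a <..< sigma r b}"
  shows "b \<in> SteinitzNat"
proof (rule ccontr)
  assume nb: "b \<notin> SteinitzNat"
  have ne: "{sigma r a <..< sigma r b} \<noteq> {}" using in_components_nonempty[OF assms(4)] .
  have sub: "{sigma r a <..< sigma r b} \<subseteq> - (sigma r ` Steinitz)" using in_components_subset[OF assms(4)] .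
  from ne have lt: "sigma r a < sigma r b" by auto
  obtain c where c: "c \<in> Steinitz" "sigma r b - (sigma r b - sigma r a) < sigma r c" "sigma r c < sigma r b"
    using approx[OF assms(1,3) nb, of "sigma r b - sigma r a"] lt by auto
  then have "sigma r c \<in> {sigma r a <..< sigma r b}" by auto
  with sub c(1) show False by auto
qed

end
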